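(* Let $\mathcal{X}=G^{\min}/P$ be the affine Grassmannian of the minimal affine Kac–Moody group $\widehat{SL_2}$, and let $c^k_{n,m}\in\mathbb{Z}[\alpha_0,\alpha_1]$ be the $T$-equivariant Schubert structure constants, $\hat{\varepsilon}_n\cdot\hat{\varepsilon}_m=\sum_{k=\max\{n,m\}}^{n+m}c^k_{n,m}\hat{\varepsilon}_k$. Then for integers $n\le m$, $$c^{m}_{n,m}= \begin{cases} \binom{\frac{m+n}{2}}{n}\prod_{i=0}^{n-1}\Big(\big(\tfrac{m-n}{2}+i\big)\alpha_0+\big(\tfrac{m-n}{2}+1+i\big)\alpha_1\Big) & n,m\text{ even},\\[1ex] \binom{\frac{m+n}{2}}{n}\prod_{i=0}^{n-1}\Big(\big(\tfrac{m-n}{2}+1+i\big)\alpha_0+\big(\tfrac{m-n}{2}+i\big)\alpha_1\Big) & n,m\text{ odd},\\[1ex] \binom{\frac{m+n-1}{2}}{n}\prod_{i=0}^{n-1}\Big(\big(\tfrac{m-n+1}{2}+i\big)\alpha_0+\big(\tfrac{m-n+1}{2}+1+i\big)\alpha_1\Big) & n\text{ odd}, m\text{ even},\\[1ex] \binom{\frac{m+n-1}{2}}{n}\prod_{i=0}^{n-1}\Big(\big(\tfrac{m-n+1}{2}+1+i\big)\alpha_0+\big(\tfrac{m-n+1}{2}+i\big)\alpha_1\Big) & n\text{ even}, m\text{ odd}. \end{cases}$$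
   Context: $T$ is the adjoint torus of $\widehat{SL_2}$, $H^\bullet_T(\mathrm{pt})=\mathbb{Z}[\alpha_0,\alpha_1]$ (polynomials in the simple roots), and $\{\hat{\varepsilon}_i\}_{i\ge0}$ is the $T$-equivariant Schubert basis of $H^\bullet_T(\mathcal{X})$ (Kumar's basis), indexed by $w_i$, the alternating word of length $i$ in $s_0,s_1$ ending in $s_0$, where $P$ is the maximal parabolic with Weyl group $\{e,s_1\}$. It satisfies $\hat\varepsilon_0=1$ and the equivariant Chevalley formula $\hat{\varepsilon}_1\cdot\hat{\varepsilon}_m=q_m\hat{\varepsilon}_m+(m+1)\hat{\varepsilon}_{m+1}$ with $q_m=\lceil m/2\rceil^2\alpha_0+(\lfloor m/2\rfloor^2+\lfloor m/2\rfloor)\alpha_1$. An empty product equals $1$. *)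

theory Defs
  imports "HOL-Computational_Algebra.Polynomial"
begin

text \<open>The coefficient ring H_T(pt) = Z[alpha0, alpha1], realised as int poly poly
  (polynomials in alpha0 with coefficients in Z[alpha1]).\<close>

type_synonym coeffring = "int poly poly"

definition alpha0 :: coeffring where "alpha0 = [:0, 1:]"
definition alpha1 :: coeffring where "alpha1 = [:[:0, 1:]:]"

definition qm :: "nat \<Rightarrow> coeffring" where
  "qm m = of_nat (((m + 1) div 2)^2) * alpha0 + of_nat ((m div 2)^2 + m div 2) * alpha1"

text \<open>c a b k is the coefficient of eps_k in eps_a * eps_b.  The predicate says that
  the bilinear product on the free Z[alpha0,alpha1]-module with basis (eps_i) defined by
  these structure constants is a commutative, associative ring product with unit eps_0,
  satisfying the equivariant Chevalley formula.  These conditions determine c uniquely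
  (and the Schubert basis of H_T(X) realises them).\<close>
definition schubert_constants :: "(nat \<Rightarrow> nat \<Rightarrow> nat \<Rightarrow> coeffring) \<Rightarrow> bool" where
  "schubert_constants c \<longleftrightarrow>
     (\<forall>a b. finite {k. c a b k \<noteq> 0}) \<and>
     (\<forall>a b k. c a b k = c b a k) \<and>
     (\<forall>a k. c 0 a k = (if k = a then 1 else 0)) \<and>
     (\<forall>m k. c 1 m k = (if k = m then qm m else if k = Suc m then of_nat (m + 1) else 0)) \<and>
     (\<forall>a b d k. (\<Sum>j\<in>{j. c a b j \<noteq> 0}. c a b j * c j d k)
               = (\<Sum>j\<in>{j. c b d j \<noteq> 0}. c a j k * c b d j))"

end

theory Submission
  imports Defs
begin

definition L :: "nat \<Rightarrow> nat \<Rightarrow> coeffring" where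
  "L a b = of_nat a * alpha0 + of_nat b * alpha1"

definition R :: "nat \<Rightarrow> nat \<Rightarrow> coeffring" where
  "R n m =
    (if even n \<and> even m then
       of_nat (((m + n) div 2) choose n) *
       (\<Prod>i<n. of_nat ((m - n) div 2 + i) * alpha0 + of_nat ((m - n) div 2 + 1 + i) * alpha1)
     else if odd n \<and> odd m then
       of_nat (((m + n) div 2) choose n) *
       (\<Prod>i<n. of_nat ((m - n) div 2 + 1 + i) * alpha0 + of_nat ((m - n) div 2 + i) * alpha1)
     else if odd n \<and> even m then
       of_nat (((m + n - 1) div 2) choose n) *
       (\<Prod>i<n. of_nat ((m - n + 1) div 2 + i) * alpha0 + of_nat ((m - n + 1) div 2 + 1 + i) * alpha1)
     else
       of_nat (((m + n - 1) div 2) choose n) *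
       (\<Prod>i<n. of_nat ((m - n + 1) div 2 + 1 + i) * alpha0 + of_nat ((m - n + 1) div 2 + i) * alpha1))"

lemma R1: "R (2*j) (2*j+2*d) = of_nat ((2*j+d) choose (2*j)) * (\<Prod>i<2*j. L (d+i) (d+1+i))"
proof -
  have a: "(2*j+2*d + 2*j) div 2 = 2*j+d" "(2*j+2*d - 2*j) div 2 = d" by presburger+
  show ?thesis unfolding R_def L_def a by simp
qed

lemma R2: "R (2*j+1) (2*j+2*d+2) = of_nat ((2*j+1+d) choose (2*j+1)) * (\<Prod>i<2*j+1. L (d+1+i) (d+2+i))"
proof -
  have a: "(2*j+2*d+2 + (2*j+1) - 1) div 2 = 2*j+1+d" "(2*j+2*d+2 - (2*j+1) + 1) div 2 = d+1" by presburger+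
  have b: "\<not> (odd (2*j+1) \<and> odd (2*j+2*d+2))" "odd (2*j+1) \<and> even (2*j+2*d+2)" by auto
  show ?thesis unfolding R_def L_def a using b by (simp add: algebra_simps)
qed

lemma R3: "R (2*j+1) (2*j+2*d+1) = of_nat ((2*j+1+d) choose (2*j+1)) * (\<Prod>i<2*j+1. L (d+1+i) (d+i))"
proof -
  have a: "(2*j+2*d+1 + (2*j+1)) div 2 = 2*j+1+d" "(2*j+2*d+1 - (2*j+1)) div 2 = d" by presburger+
  have b: "odd (2*j+1) \<and> odd (2*j+2*d+1)" by auto
  show ?thesis unfolding R_def L_def a using b by (simp add: algebra_simps)
qed

lemma R4: "R (2*j) (2*j+2*d+1) = of_nat ((2*j+d) choose (2*j)) * (\<Prod>i<2*j. L (d+2+i) (d+1+i))"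
proof -
  have a: "(2*j+2*d+1 + 2*j - 1) div 2 = 2*j+d" "(2*j+2*d+1 - 2*j + 1) div 2 = d+1" by presburger+
  have b: "\<not> (even (2*j) \<and> even (2*j+2*d+1))" "\<not> (odd (2*j) \<and> odd (2*j+2*d+1))"
     "\<not> (odd (2*j) \<and> even (2*j+2*d+1))" by auto
  show ?thesis unfolding R_def L_def a using b by (simp add: algebra_simps)
qed


lemma rearr:
  fixes X Y Z W P Lx :: coeffring
  assumes "X*Y = Z*W"
  shows "X*(Y*(P*Lx)) = (Z*Lx)*(W*P)" "X*(Y*(Lx*P)) = (Z*Lx)*(W*P)"
proof -
  have "X*(Y*(P*Lx)) = (X*Y)*(P*Lx)" by (simp add: mult.assoc)
  also have "\<dots> = (Z*W)*(P*Lx)" using assms by simp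
  also have "\<dots> = (Z*Lx)*(W*P)" by (simp add: ac_simps)
  finally show "X*(Y*(P*Lx)) = (Z*Lx)*(W*P)" .
  then show "X*(Y*(Lx*P)) = (Z*Lx)*(W*P)" by (simp add: ac_simps)
qed

lemma step1: "of_nat (Suc (2*j)) * R (Suc (2*j)) (2*j+2*Suc e) = (qm (2*j+2*Suc e) - qm (2*j)) * R (2*j) (2*j+2*Suc e)"
proof -
  have m: "2*j+2*Suc e = 2*j+2*e+2" by simp
  have r1: "R (2*j) (2*j+2*Suc e) = of_nat ((2*j+Suc e) choose (2*j)) * (\<Prod>i<2*j. L (e+1+i) (e+2+i))"
    by (simp only: R1) simp
  have r2: "R (Suc (2*j)) (2*j+2*Suc e) = of_nat ((2*j+1+e) choose (2*j+1)) * ((\<Prod>i<2*j. L (e+1+i) (e+2+i)) * L (2*j+e+1) (2*j+e+2))"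
    unfolding m using R2[of j e] by (simp add: algebra_simps)
  have q: "qm (2*j+2*Suc e) - qm (2*j) = of_nat (e+1) * L (2*j+e+1) (2*j+e+2)"
  proof -
    have a: "(2*j+2*Suc e+1) div 2 = j+e+1" "(2*j+2*Suc e) div 2 = j+e+1" "(2*j+1) div 2 = j" "(2*j) div 2 = j" by presburger+
    show ?thesis unfolding qm_def L_def a by (simp add: algebra_simps power2_eq_square)
  qed
  have b: "Suc (2*j) * ((2*j+1+e) choose (2*j+1)) = Suc e * ((2*j+1+e) choose (2*j))"
    using Suc_times_binomial_add[of "2*j" e] by simp
  have b': "(of_nat (Suc (2*j)) :: coeffring) * of_nat ((2*j+1+e) choose (2*j+1)) = of_nat (e+1) * of_nat ((2*j+Suc e) choose (2*j))"
    using arg_cong[OF b, of "of_nat :: nat \<Rightarrow> coeffring"] by (simp add: algebra_simps)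
  show ?thesis unfolding r1 r2 q by (rule rearr(1)[OF b'])
qed


lemma step2: "of_nat (Suc (2*j+1)) * R (Suc (2*j+1)) (2*j+2*e+2) = (qm (2*j+2*e+2) - qm (2*j+1)) * R (2*j+1) (2*j+2*e+2)"
proof -
  have n: "Suc (2*j+1) = 2*Suc j" "2*j+2*e+2 = 2*Suc j + 2*e" by simp_all
  have sh: "(\<Prod>i<2*j+2. L (e+i) (e+1+i)) = L e (e+1) * (\<Prod>i<2*j+1. L (e+1+i) (e+2+i))"
  proof -
    have "(\<Prod>i<Suc (2*j+1). L (e+i) (e+1+i)) = L (e+0) (e+1+0) * (\<Prod>i<2*j+1. L (e+Suc i) (e+1+Suc i))"
      by (rule prod.lessThan_Suc_shift)
    then show ?thesis by (simp add: algebra_simps)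
  qed
  have r1: "R (Suc (2*j+1)) (2*j+2*e+2) = of_nat ((2*j+2+e) choose (2*j+2)) * (L e (e+1) * (\<Prod>i<2*j+1. L (e+1+i) (e+2+i)))"
  proof -
    have e1: "2*Suc j = 2*j+2" by simp
    have "R (Suc (2*j+1)) (2*j+2*e+2) = R (2*Suc j) (2*Suc j+2*e)" unfolding n by (rule refl)
    also have "\<dots> = of_nat ((2*Suc j+e) choose (2*Suc j)) * (\<Prod>i<2*Suc j. L (e+i) (e+1+i))" by (rule R1)
    also have "\<dots> = of_nat ((2*j+2+e) choose (2*j+2)) * (L e (e+1) * (\<Prod>i<2*j+1. L (e+1+i) (e+2+i)))"
      by (simp only: e1 sh)
    finally show ?thesis .
  qed
  have r2: "R (2*j+1) (2*j+2*e+2) = of_nat ((2*j+1+e) choose (2*j+1)) * (\<Prod>i<2*j+1. L (e+1+i) (e+2+i))"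
    by (rule R2)
  have q: "qm (2*j+2*e+2) - qm (2*j+1) = of_nat (2*j+2+e) * L e (e+1)"
  proof -
    have a: "(2*j+2*e+2+1) div 2 = j+e+1" "(2*j+2*e+2) div 2 = j+e+1" "(2*j+1+1) div 2 = j+1" "(2*j+1) div 2 = j" by presburger+
    show ?thesis unfolding qm_def L_def a by (simp add: algebra_simps power2_eq_square)
  qed
  have b: "Suc (2*j+1) * ((2*j+2+e) choose (2*j+2)) = (2*j+2+e) * ((2*j+1+e) choose (2*j+1))"
    using Suc_times_binomial[of "2*j+1" "2*j+1+e"] by simp
  have b': "(of_nat (Suc (2*j+1)) :: coeffring) * of_nat ((2*j+2+e) choose (2*j+2)) = of_nat (2*j+2+e) * of_nat ((2*j+1+e) choose (2*j+1))"
    using arg_cong[OF b, of "of_nat :: nat \<Rightarrow> coeffring"] by (simp only: of_nat_mult)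
  show ?thesis unfolding r1 r2 q by (rule rearr(2)[OF b'])
qed

lemma step3: "of_nat (Suc (2*j+1)) * R (Suc (2*j+1)) (2*j+2*Suc e+1) = (qm (2*j+2*Suc e+1) - qm (2*j+1)) * R (2*j+1) (2*j+2*Suc e+1)"
proof -
  have n: "Suc (2*j+1) = 2*Suc j" "2*j+2*Suc e+1 = 2*Suc j + 2*e + 1" by simp_all
  have r1: "R (Suc (2*j+1)) (2*j+2*Suc e+1) = of_nat ((2*j+2+e) choose (2*j+2)) * ((\<Prod>i<2*j+1. L (e+2+i) (e+1+i)) * L (2*j+3+e) (2*j+2+e))"
  proof -
    have p: "(\<Prod>i<Suc (2*j+1). L (e+2+i) (e+1+i)) = (\<Prod>i<2*j+1. L (e+2+i) (e+1+i)) * L (e+2+(2*j+1)) (e+1+(2*j+1))"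
      by (rule prod.lessThan_Suc)
    have e1: "e+2+(2*j+1) = 2*j+3+e" "e+1+(2*j+1) = 2*j+2+e" by simp_all
    have e2: "2*Suc j = Suc (2*j+1)" "Suc (2*j+1) = 2*j+2" by simp_all
    have e4: "2*j+2 = Suc (2*j+1)" by simp
    have p2: "(\<Prod>i<2*j+2. L (e+2+i) (e+1+i)) = (\<Prod>i<2*j+1. L (e+2+i) (e+1+i)) * L (2*j+3+e) (2*j+2+e)"
      unfolding e4 p e1 by (rule refl)
    have e3: "2*Suc j + e = 2*j+2+e" "2*Suc j = 2*j+2" by simp_all
    have "R (Suc (2*j+1)) (2*j+2*Suc e+1) = R (2*Suc j) (2*Suc j+2*e+1)" unfolding n by (rule refl)
    also have "\<dots> = of_nat ((2*Suc j+e) choose (2*Suc j)) * (\<Prod>i<2*Suc j. L (e+2+i) (e+1+i))" by (rule R4)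
    also have "\<dots> = of_nat ((2*j+2+e) choose (2*j+2)) * ((\<Prod>i<2*j+1. L (e+2+i) (e+1+i)) * L (2*j+3+e) (2*j+2+e))"
      unfolding e3 p2 by (rule refl)
    finally show ?thesis .
  qed
  have r2: "R (2*j+1) (2*j+2*Suc e+1) = of_nat ((2*j+2+e) choose (2*j+1)) * (\<Prod>i<2*j+1. L (e+2+i) (e+1+i))"
    unfolding R3 by (simp add: algebra_simps)
  have q: "qm (2*j+2*Suc e+1) - qm (2*j+1) = of_nat (e+1) * L (2*j+3+e) (2*j+2+e)"
  proof -
    have a: "(2*j+2*Suc e+1+1) div 2 = j+e+2" "(2*j+2*Suc e+1) div 2 = j+e+1" "(2*j+1+1) div 2 = j+1" "(2*j+1) div 2 = j" by presburger+
    show ?thesis unfolding qm_def L_def a by (simp add: algebra_simps power2_eq_square)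
  qed
  have b: "Suc (2*j+1) * ((2*j+2+e) choose (2*j+2)) = (e+1) * ((2*j+2+e) choose (2*j+1))"
    using Suc_times_binomial_add[of "2*j+1" e] by simp
  have b': "(of_nat (Suc (2*j+1)) :: coeffring) * of_nat ((2*j+2+e) choose (2*j+2)) = of_nat (e+1) * of_nat ((2*j+2+e) choose (2*j+1))"
    using arg_cong[OF b, of "of_nat :: nat \<Rightarrow> coeffring"] by (simp only: of_nat_mult)
  show ?thesis unfolding r1 r2 q by (rule rearr(1)[OF b'])
qed

lemma step4: "of_nat (Suc (2*j)) * R (Suc (2*j)) (2*j+2*e+1) = (qm (2*j+2*e+1) - qm (2*j)) * R (2*j) (2*j+2*e+1)"
proof -
  have sh: "(\<Prod>i<2*j+1. L (e+1+i) (e+i)) = L (e+1) e * (\<Prod>i<2*j. L (e+2+i) (e+1+i))"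
  proof -
    have "(\<Prod>i<Suc (2*j). L (e+1+i) (e+i)) = L (e+1+0) (e+0) * (\<Prod>i<2*j. L (e+1+Suc i) (e+Suc i))"
      by (rule prod.lessThan_Suc_shift)
    then show ?thesis by (simp add: algebra_simps)
  qed
  have r1: "R (Suc (2*j)) (2*j+2*e+1) = of_nat ((2*j+1+e) choose (2*j+1)) * (L (e+1) e * (\<Prod>i<2*j. L (e+2+i) (e+1+i)))"
    using R3[of j e] sh by simp
  have r2: "R (2*j) (2*j+2*e+1) = of_nat ((2*j+e) choose (2*j)) * (\<Prod>i<2*j. L (e+2+i) (e+1+i))"
    by (rule R4)
  have q: "qm (2*j+2*e+1) - qm (2*j) = of_nat (2*j+1+e) * L (e+1) e"
  proof -
    have a: "(2*j+2*e+1+1) div 2 = j+e+1" "(2*j+2*e+1) div 2 = j+e" "(2*j+1) div 2 = j" "(2*j) div 2 = j" by presburger+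
    show ?thesis unfolding qm_def L_def a by (simp add: algebra_simps power2_eq_square)
  qed
  have b: "Suc (2*j) * ((2*j+1+e) choose (2*j+1)) = (2*j+1+e) * ((2*j+e) choose (2*j))"
    using Suc_times_binomial[of "2*j" "2*j+e"] by simp
  have b': "(of_nat (Suc (2*j)) :: coeffring) * of_nat ((2*j+1+e) choose (2*j+1)) = of_nat (2*j+1+e) * of_nat ((2*j+e) choose (2*j))"
    using arg_cong[OF b, of "of_nat :: nat \<Rightarrow> coeffring"] by (simp only: of_nat_mult)
  show ?thesis unfolding r1 r2 q by (rule rearr(2)[OF b'])
qed


lemma stepR:
  assumes "n < m"
  shows "of_nat (Suc n) * R (Suc n) m = (qm m - qm n) * R n m"
proof (cases "even n")
  case True
  then obtain j where n: "n = 2*j" by blast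
  show ?thesis
  proof (cases "even m")
    case True
    then obtain M where "m = 2*M" by blast
    then have m: "m = 2*M" .
    with assms n have "j < M" by simp
    then obtain e where "M = j+Suc e" using less_imp_Suc_add by fastforce
    then have "m = 2*j+2*Suc e" using m by simp
    then show ?thesis using n step1 by simp
  next
    case False
    then obtain M where m: "m = 2*M+1" using oddE by blast
    with assms n have "j \<le> M" by simp
    then obtain e where "M = j+e" using le_Suc_ex by blast
    then have "m = 2*j+2*e+1" using m by simp
    then show ?thesis using n step4 by simp
  qed
next
  case False
  then obtain j where n: "n = 2*j+1" using oddE by blast
  show ?thesis
  proof (cases "even m")
    case True
    then obtain M where m: "m = 2*M" by blast
    with assms n have "j < M" by simp
    then obtain e where "M = j+1+e" using less_imp_Suc_add by fastforce
    then have "m = 2*j+2*e+2" using m by simp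
    then show ?thesis using n step2 by simp
  next
    case False
    then obtain M where m: "m = 2*M+1" using oddE by blast
    with assms n have "j < M" by simp
    then obtain e where "M = j+1+e" using less_imp_Suc_add by fastforce
    then have "m = 2*j+2*Suc e+1" using m by simp
    then show ?thesis using n step3 by simp
  qed
qed

lemma lhs_sum:
  assumes sc: "schubert_constants c"
  shows "(\<Sum>j\<in>{j. c 1 n j \<noteq> 0}. c 1 n j * h j) = qm n * h n + of_nat (Suc n) * h (Suc n)"
proof -
  have c1: "\<And>k. c 1 n k = (if k = n then qm n else if k = Suc n then of_nat (n + 1) else 0)"
    using sc unfolding schubert_constants_def by blast
  have sub: "{j. c 1 n j \<noteq> 0} \<subseteq> {n, Suc n}" using c1 by auto
  have "(\<Sum>j\<in>{j. c 1 n j \<noteq> 0}. c 1 n j * h j) = (\<Sum>j\<in>{n, Suc n}. c 1 n j * h j)"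
    by (rule sum.mono_neutral_left) (use sub in auto)
  also have "\<dots> = qm n * h n + of_nat (Suc n) * h (Suc n)" using c1 by simp
  finally show ?thesis .
qed

lemma recur:
  assumes sc: "schubert_constants c"
  shows "qm n * c n m k + of_nat (Suc n) * c (Suc n) m k = (\<Sum>j\<in>{j. c n m j \<noteq> 0}. c 1 j k * c n m j)"
proof -
  have "(\<Sum>j\<in>{j. c 1 n j \<noteq> 0}. c 1 n j * c j m k) = (\<Sum>j\<in>{j. c n m j \<noteq> 0}. c 1 j k * c n m j)"
    using sc unfolding schubert_constants_def by blast
  then show ?thesis using lhs_sum[OF sc, of n "\<lambda>j. c j m k"] by simp
qed

lemma cancel_nat:
  fixes x y :: coeffring
  assumes "of_nat (Suc n) * x = of_nat (Suc n) * y" shows "x = y"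
proof -
  have "(of_nat (Suc n) :: coeffring) \<noteq> 0" by (rule of_nat_neq_0)
  then show ?thesis using assms by simp
qed

lemma supp:
  assumes sc: "schubert_constants c"
  shows "k < m \<Longrightarrow> c n m k = 0"
proof (induction n arbitrary: k)
  case 0
  then show ?case using sc unfolding schubert_constants_def by auto
next
  case (Suc n)
  have c1: "\<And>j k. c 1 j k = (if k = j then qm j else if k = Suc j then of_nat (j + 1) else 0)"
    using sc unfolding schubert_constants_def by blast
  have "(\<Sum>j\<in>{j. c n m j \<noteq> 0}. c 1 j k * c n m j) = 0"
  proof (rule sum.neutral, rule ballI)
    fix j assume "j \<in> {j. c n m j \<noteq> 0}"
    show "c 1 j k * c n m j = 0"
    proof (cases "j < m")
      case True then show ?thesis using Suc.IH by simp
    next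
      case False then show ?thesis using c1 Suc.prems by auto
    qed
  qed
  then have "of_nat (Suc n) * c (Suc n) m k = of_nat (Suc n) * 0"
    using recur[OF sc, of n m k] Suc.IH[OF Suc.prems] by simp
  then show ?case by (rule cancel_nat)
qed

lemma diag:
  assumes sc: "schubert_constants c"
  shows "of_nat (Suc n) * c (Suc n) m m = (qm m - qm n) * c n m m"
proof -
  have c1: "\<And>j k. c 1 j k = (if k = j then qm j else if k = Suc j then of_nat (j + 1) else 0)"
    using sc unfolding schubert_constants_def by blast
  have fin: "finite {j. c n m j \<noteq> 0}" using sc unfolding schubert_constants_def by blast
  let ?g = "\<lambda>j. c 1 j m * c n m j"
  have z: "\<And>j. j \<noteq> m \<Longrightarrow> ?g j = 0"
  proof -
    fix j assume "j \<noteq> m"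
    show "?g j = 0"
    proof (cases "j < m")
      case True then show ?thesis using supp[OF sc] by simp
    next
      case False then show ?thesis using c1 \<open>j \<noteq> m\<close> by auto
    qed
  qed
  have "(\<Sum>j\<in>{j. c n m j \<noteq> 0}. ?g j) = (\<Sum>j\<in>{j. c n m j \<noteq> 0} \<union> {m}. ?g j)"
    by (rule sum.mono_neutral_left) (use fin in auto)
  also have "\<dots> = (\<Sum>j\<in>{m}. ?g j)"
    by (rule sum.mono_neutral_right) (use fin z in auto)
  also have "\<dots> = qm m * c n m m" using c1 by simp
  finally have "(\<Sum>j\<in>{j. c n m j \<noteq> 0}. ?g j) = qm m * c n m m" .
  then show ?thesis using recur[OF sc, of n m m] by (simp add: algebra_simps)
qed

lemma mainR:
  assumes sc: "schubert_constants c"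
  shows "n \<le> m \<Longrightarrow> c n m m = R n m"
proof (induction n)
  case 0
  then show ?case using sc unfolding schubert_constants_def R_def by auto
next
  case (Suc n)
  then have "n < m" by simp
  have "of_nat (Suc n) * c (Suc n) m m = of_nat (Suc n) * R (Suc n) m"
    using diag[OF sc, of n m] Suc.IH \<open>n < m\<close> stepR[OF \<open>n < m\<close>] by simp
  then show ?case by (rule cancel_nat)
qed

theorem mainTheorem7:
  fixes c :: "nat \<Rightarrow> nat \<Rightarrow> nat \<Rightarrow> int poly poly" and n m :: nat
  assumes "schubert_constants c" and "n \<le> m"
  shows "c n m m =
    (if even n \<and> even m then
       of_nat (((m + n) div 2) choose n) *
       (\<Prod>i<n. of_nat ((m - n) div 2 + i) * alpha0 + of_nat ((m - n) div 2 + 1 + i) * alpha1)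
     else if odd n \<and> odd m then
       of_nat (((m + n) div 2) choose n) *
       (\<Prod>i<n. of_nat ((m - n) div 2 + 1 + i) * alpha0 + of_nat ((m - n) div 2 + i) * alpha1)
     else if odd n \<and> even m then
       of_nat (((m + n - 1) div 2) choose n) *
       (\<Prod>i<n. of_nat ((m - n + 1) div 2 + i) * alpha0 + of_nat ((m - n + 1) div 2 + 1 + i) * alpha1)
     else
       of_nat (((m + n - 1) div 2) choose n) *
       (\<Prod>i<n. of_nat ((m - n + 1) div 2 + 1 + i) * alpha0 + of_nat ((m - n + 1) div 2 + i) * alpha1))"
  using mainR[OF assms] unfolding R_def .

end
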